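(* Let $\mathcal G$ be a shortest-path game in which $\mathrm{Val}^{\mathrm d}(v)\neq+\infty$ and $\overline{\mathrm{Val}}^{\mathrm m}(v)\neq+\infty$ for all vertices $v$. Let $\sigma_1$ be a fake-optimal NC-strategy of Min, $\sigma_2$ an attractor strategy of Min, $p\in(0,1)$, $\rho_p$ the memoryless strategy defined below, and $v_0\in V$. Then for every memoryless strategy $\tau$ of Max, $\mathbb P^{\rho_p,\tau}_{v_0}(\Diamond T)=1$, i.e. the target set is reached with probability 1.
   Context: A shortest-path game is $\mathcal G=(V_{\mathrm{Max}},V_{\mathrm{Min}},T,E,w)$ with finite $V=V_{\mathrm{Max}}\uplus V_{\mathrm{Min}}\uplus T$, edges $E\subseteq (V\setminus T)\times V$ with every non-target vertex having a successor, and integer weights $w\colon E\to\mathbb Z$. Plays from $v$ are finite paths ending at their first visit to $T$ (total payoff $\mathrm{TP}$ = sum of weights) or infinite paths avoiding $T$ ($\mathrm{TP}=+\infty$). Strategies of Min (resp. Max) map finite paths ending in $V_{\mathrm{Min}}$ (resp. $V_{\mathrm{Max}}$) to distributions on successors of the last vertex; deterministic = always Dirac, memoryless = depends only on the last vertex. For deterministic $\sigma,\tau$, $\mathrm{Val}^\sigma(v)=\sup_\tau \mathrm{TP}$ of the unique conforming play, and $\mathrm{Val}^{\mathrm d}(v)=\inf_\sigma\mathrm{Val}^\sigma(v)$. For memoryless $\rho$ (Min) and $\tau$ (Max), $\mathbb P^{\rho,\tau}_v$ and $\mathbb E^{\rho,\tau}_v$ refer to the induced Markov chain from $v$; $\overline{\mathrm{Val}}^{\mathrm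 m}(v)=\inf_\rho\sup_\tau\mathbb E^{\rho,\tau}_v(\mathrm{TP})$ over memoryless strategies. A path conforms to a memoryless deterministic Min strategy $\sigma_1$ if each Min vertex $u$ on it (except possibly the last) is followed by $\sigma_1(u)$. An NC-strategy is a memoryless deterministic Min strategy all of whose conforming cycles have negative total weight; it is fake-optimal if for all $v$, every finite play from $v$ ending in $T$ conforming to it has total payoff at most $\mathrm{Val}^{\mathrm d}(v)$. An attractor strategy is a memoryless deterministic Min strategy guaranteeing that every conforming play reaches $T$. The strategy $\rho_p$: for $v\in V_{\mathrm{Min}}$, if the strongly connected component of $v$ in $(V,E)$ contains no negative-weight cycle, $\rho_p(v)$ is the Dirac distribution on $\sigma_1(v)$; otherwise, if $\sigma_1(v)\ne\sigma_2(v)$, $\rho_p(v)$ chooses $\sigma_1(v)$ with probability $p$ and $\sigma_2(v)$ with probability $1-p$, and if $\sigma_1(v)=\sigma_2(v)$ it chooses it with probability 1. *)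

theory Defs
  imports "HOL-Probability.Probability"
begin

text \<open>Vertices form a finite type 'v; V = UNIV is partitioned into VMax, VMin, T.
  Weights are given by w :: 'v => 'v => int (only relevant on edges).\<close>

definition spg :: "'v::finite set \<Rightarrow> 'v set \<Rightarrow> 'v set \<Rightarrow> ('v \<times> 'v) set \<Rightarrow> bool" where
  "spg VMax VMin T E \<longleftrightarrow>
     VMax \<inter> VMin = {} \<and> VMax \<inter> T = {} \<and> VMin \<inter> T = {} \<and> VMax \<union> VMin \<union> T = UNIV \<and>
     E \<subseteq> (- T) \<times> UNIV \<and> (\<forall>v. v \<notin> T \<longrightarrow> (\<exists>u. (v, u) \<in> E))"

definition is_path :: "('v \<times> 'v) set \<Rightarrow> 'v list \<Rightarrow> bool" where
  "is_path E xs \<longleftrightarrow> xs \<noteq> [] \<and> (\<forall>i < length xs - 1. (xs ! i, xs ! Suc i) \<in> E)"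

definition path_weight :: "('v \<Rightarrow> 'v \<Rightarrow> int) \<Rightarrow> 'v list \<Rightarrow> int" where
  "path_weight w xs = (\<Sum>i < length xs - 1. w (xs ! i) (xs ! Suc i))"

definition is_cycle :: "('v \<times> 'v) set \<Rightarrow> 'v list \<Rightarrow> bool" where
  "is_cycle E xs \<longleftrightarrow> is_path E xs \<and> length xs \<ge> 2 \<and> hd xs = last xs"

definition conforms :: "'v set \<Rightarrow> ('v \<Rightarrow> 'v) \<Rightarrow> 'v list \<Rightarrow> bool" where
  "conforms VMin \<sigma> xs \<longleftrightarrow> (\<forall>i < length xs - 1. xs ! i \<in> VMin \<longrightarrow> xs ! Suc i = \<sigma> (xs ! i))"

text \<open>A play is represented by an infinite vertex sequence; once the target is reached, only the
  prefix up to the first visit of T matters.\<close>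
definition TP :: "'v set \<Rightarrow> ('v \<Rightarrow> 'v \<Rightarrow> int) \<Rightarrow> (nat \<Rightarrow> 'v) \<Rightarrow> ereal" where
  "TP T w \<omega> = (if \<exists>n. \<omega> n \<in> T
      then ereal (real_of_int (\<Sum>i < (LEAST n. \<omega> n \<in> T). w (\<omega> i) (\<omega> (Suc i))))
      else \<infinity>)"

definition det_strategy :: "('v \<times> 'v) set \<Rightarrow> 'v set \<Rightarrow> ('v list \<Rightarrow> 'v) \<Rightarrow> bool" where
  "det_strategy E VP \<sigma> \<longleftrightarrow> (\<forall>h. h \<noteq> [] \<and> last h \<in> VP \<longrightarrow> (last h, \<sigma> h) \<in> E)"

primrec history :: "'v set \<Rightarrow> 'v set \<Rightarrow> ('v list \<Rightarrow> 'v) \<Rightarrow> ('v list \<Rightarrow> 'v) \<Rightarrow> 'v \<Rightarrow> nat \<Rightarrow> 'v list" where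
  "history VMin T \<sigma> \<tau> v 0 = [v]"
| "history VMin T \<sigma> \<tau> v (Suc n) =
     (let h = history VMin T \<sigma> \<tau> v n; u = last h
      in h @ [if u \<in> T then u else if u \<in> VMin then \<sigma> h else \<tau> h])"

definition det_play :: "'v set \<Rightarrow> 'v set \<Rightarrow> ('v list \<Rightarrow> 'v) \<Rightarrow> ('v list \<Rightarrow> 'v) \<Rightarrow> 'v \<Rightarrow> nat \<Rightarrow> 'v" where
  "det_play VMin T \<sigma> \<tau> v n = history VMin T \<sigma> \<tau> v n ! n"

definition Val_sigma :: "'v set \<Rightarrow> 'v set \<Rightarrow> 'v set \<Rightarrow> ('v \<times> 'v) set \<Rightarrow> ('v \<Rightarrow> 'v \<Rightarrow> int)
    \<Rightarrow> ('v list \<Rightarrow> 'v) \<Rightarrow> 'v \<Rightarrow> ereal" where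
  "Val_sigma VMax VMin T E w \<sigma> v =
     (SUP \<tau> \<in> {\<tau>. det_strategy E VMax \<tau>}. TP T w (det_play VMin T \<sigma> \<tau> v))"

definition Val_d :: "'v set \<Rightarrow> 'v set \<Rightarrow> 'v set \<Rightarrow> ('v \<times> 'v) set \<Rightarrow> ('v \<Rightarrow> 'v \<Rightarrow> int) \<Rightarrow> 'v \<Rightarrow> ereal" where
  "Val_d VMax VMin T E w v =
     (INF \<sigma> \<in> {\<sigma>. det_strategy E VMin \<sigma>}. Val_sigma VMax VMin T E w \<sigma> v)"

definition memoryless_strategy :: "('v \<times> 'v) set \<Rightarrow> 'v set \<Rightarrow> ('v \<Rightarrow> 'v pmf) \<Rightarrow> bool" where
  "memoryless_strategy E VP \<rho> \<longleftrightarrow> (\<forall>u \<in> VP. \<forall>x \<in> set_pmf (\<rho> u). (u, x) \<in> E)"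

text \<open>Transition kernel of the Markov chain induced by memoryless rho (Min) and tau (Max);
  target vertices are made absorbing (plays end there).\<close>
definition mc_kernel :: "'v set \<Rightarrow> 'v set \<Rightarrow> ('v \<Rightarrow> 'v pmf) \<Rightarrow> ('v \<Rightarrow> 'v pmf) \<Rightarrow> 'v \<Rightarrow> 'v pmf" where
  "mc_kernel VMax VMin \<rho> \<tau> u =
     (if u \<in> VMin then \<rho> u else if u \<in> VMax then \<tau> u else return_pmf u)"

definition mc_step :: "('v \<Rightarrow> 'v pmf) \<Rightarrow> 'v \<Rightarrow> nat \<Rightarrow> (nat \<Rightarrow> 'v) \<Rightarrow> 'v measure" where
  "mc_step K v i \<omega> = (if i = 0 then return (count_space UNIV) v else measure_pmf (K (\<omega> (i - 1))))"

definition mc_paths :: "('v \<Rightarrow> 'v pmf) \<Rightarrow> 'v \<Rightarrow> (nat \<Rightarrow> 'v) measure" where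
  "mc_paths K v = projective_family.lim UNIV
      (Ionescu_Tulcea.CI (mc_step K v) (\<lambda>_. count_space UNIV)) (\<lambda>_. count_space UNIV)"

definition ereal_expectation :: "'a measure \<Rightarrow> ('a \<Rightarrow> ereal) \<Rightarrow> ereal" where
  "ereal_expectation M X =
     enn2ereal (\<integral>\<^sup>+ x. e2ennreal (max 0 (X x)) \<partial>M) - enn2ereal (\<integral>\<^sup>+ x. e2ennreal (max 0 (- X x)) \<partial>M)"

definition Val_m_bar :: "'v set \<Rightarrow> 'v set \<Rightarrow> 'v set \<Rightarrow> ('v \<times> 'v) set \<Rightarrow> ('v \<Rightarrow> 'v \<Rightarrow> int) \<Rightarrow> 'v \<Rightarrow> ereal" where
  "Val_m_bar VMax VMin T E w v =
     (INF \<rho> \<in> {\<rho>. memoryless_strategy E VMin \<rho>}. SUP \<tau> \<in> {\<tau>. memoryless_strategy E VMax \<tau>}.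
        ereal_expectation (mc_paths (mc_kernel VMax VMin \<rho> \<tau>) v) (TP T w))"

definition md_strategy :: "('v \<times> 'v) set \<Rightarrow> 'v set \<Rightarrow> ('v \<Rightarrow> 'v) \<Rightarrow> bool" where
  "md_strategy E VMin \<sigma> \<longleftrightarrow> (\<forall>u \<in> VMin. (u, \<sigma> u) \<in> E)"

definition NC_strategy :: "'v set \<Rightarrow> ('v \<times> 'v) set \<Rightarrow> ('v \<Rightarrow> 'v \<Rightarrow> int) \<Rightarrow> ('v \<Rightarrow> 'v) \<Rightarrow> bool" where
  "NC_strategy VMin E w \<sigma> \<longleftrightarrow> md_strategy E VMin \<sigma> \<and>
     (\<forall>xs. is_cycle E xs \<and> conforms VMin \<sigma> xs \<longrightarrow> path_weight w xs < 0)"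

definition fake_optimal :: "'v set \<Rightarrow> 'v set \<Rightarrow> 'v set \<Rightarrow> ('v \<times> 'v) set \<Rightarrow> ('v \<Rightarrow> 'v \<Rightarrow> int)
    \<Rightarrow> ('v \<Rightarrow> 'v) \<Rightarrow> bool" where
  "fake_optimal VMax VMin T E w \<sigma> \<longleftrightarrow>
     (\<forall>v xs. is_path E xs \<and> hd xs = v \<and> last xs \<in> T \<and> (\<forall>i < length xs - 1. xs ! i \<notin> T) \<and>
        conforms VMin \<sigma> xs \<longrightarrow> ereal (real_of_int (path_weight w xs)) \<le> Val_d VMax VMin T E w v)"

text \<open>Every play conforming to sigma reaches T: there is no infinite path (which necessarily
  avoids T, as T has no outgoing edges) conforming to sigma.\<close>
definition attractor_strategy :: "'v set \<Rightarrow> 'v set \<Rightarrow> ('v \<times> 'v) set \<Rightarrow> ('v \<Rightarrow> 'v) \<Rightarrow> bool" where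
  "attractor_strategy VMin T E \<sigma> \<longleftrightarrow> md_strategy E VMin \<sigma> \<and>
     \<not> (\<exists>\<omega>. \<forall>n. \<omega> n \<notin> T \<and> (\<omega> n, \<omega> (Suc n)) \<in> E \<and> (\<omega> n \<in> VMin \<longrightarrow> \<omega> (Suc n) = \<sigma> (\<omega> n)))"

definition scc :: "('v \<times> 'v) set \<Rightarrow> 'v \<Rightarrow> 'v set" where
  "scc E v = {u. (v, u) \<in> E\<^sup>* \<and> (u, v) \<in> E\<^sup>*}"

definition scc_has_neg_cycle :: "('v \<times> 'v) set \<Rightarrow> ('v \<Rightarrow> 'v \<Rightarrow> int) \<Rightarrow> 'v \<Rightarrow> bool" where
  "scc_has_neg_cycle E w v \<longleftrightarrow> (\<exists>xs. is_cycle E xs \<and> set xs \<subseteq> scc E v \<and> path_weight w xs < 0)"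

definition rho_p :: "('v \<times> 'v) set \<Rightarrow> ('v \<Rightarrow> 'v \<Rightarrow> int) \<Rightarrow> ('v \<Rightarrow> 'v) \<Rightarrow> ('v \<Rightarrow> 'v) \<Rightarrow> real \<Rightarrow> 'v \<Rightarrow> 'v pmf" where
  "rho_p E w \<sigma>1 \<sigma>2 p v =
     (if \<not> scc_has_neg_cycle E w v then return_pmf (\<sigma>1 v)
      else if \<sigma>1 v \<noteq> \<sigma>2 v then map_pmf (\<lambda>b. if b then \<sigma>1 v else \<sigma>2 v) (bernoulli_pmf p)
      else return_pmf (\<sigma>1 v))"

end

theory Submission
  imports Defs
begin

lemma sets_PiM_countable_all:
  fixes I :: "nat set"
  assumes "finite I" "A \<subseteq> space (PiM I (\<lambda>_. count_space (UNIV::'v::countable set)))"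
  shows "A \<in> sets (PiM I (\<lambda>_. count_space (UNIV::'v set)))"
proof (rule sets.countable)
  fix a assume "a \<in> A"
  then have a: "a \<in> PiE I (\<lambda>_. UNIV)" using assms(2) by (auto simp: space_PiM)
  then have "{a} = PiE I (\<lambda>i. {a i})"
    by (auto simp: PiE_iff extensional_def fun_eq_iff) metis
  then show "{a} \<in> sets (PiM I (\<lambda>_. count_space (UNIV::'v set)))"
    using assms(1) by (auto intro!: sets_PiM_I_finite)
next
  have "countable (PiE I (\<lambda>_. (UNIV::'v set)))"
    using assms(1) by (intro countable_PiE) auto
  then show "countable A" using assms(2) by (auto simp: space_PiM intro: countable_subset)
qed

lemma measurable_PiM_countable_all:
  fixes I :: "nat set"
  assumes "finite I" "\<And>x. x \<in> space (PiM I (\<lambda>_. count_space (UNIV::'v::countable set))) \<Longrightarrow> f x \<in> space N"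
  shows "f \<in> measurable (PiM I (\<lambda>_. count_space (UNIV::'v set))) N"
  unfolding measurable_def
proof (intro CollectI conjI ballI)
  show "f \<in> space (PiM I (\<lambda>_. count_space UNIV)) \<rightarrow> space N" using assms(2) by auto
  fix y assume "y \<in> sets N"
  show "f -` y \<inter> space (PiM I (\<lambda>_. count_space UNIV)) \<in> sets (PiM I (\<lambda>_. count_space (UNIV::'v set)))"
    by (rule sets_PiM_countable_all[OF assms(1)]) auto
qed

lemma IT_mc:
  fixes K :: "'v::finite \<Rightarrow> 'v pmf"
  shows "Ionescu_Tulcea (mc_step K v) (\<lambda>_. count_space UNIV)"
proof -
  have sp: "mc_step K v i x \<in> space (subprob_algebra (count_space UNIV))" for i x
  proof (cases "i = 0")
    case True
    then show ?thesis
      by (simp add: mc_step_def space_subprob_algebra subprob_space_return)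
  next
    case False
    then show ?thesis
      by (simp add: mc_step_def space_subprob_algebra prob_space_imp_subprob_space[OF measure_pmf.prob_space_axioms])
  qed
  have ps: "prob_space (mc_step K v i x)" for i x
    by (simp add: mc_step_def prob_space_return measure_pmf.prob_space_axioms)
  show ?thesis
    by (intro Ionescu_Tulcea.intro measurable_PiM_countable_all sp ps) simp
qed

definition Qk :: "('v \<Rightarrow> 'v pmf) \<Rightarrow> 'v set \<Rightarrow> 'v \<Rightarrow> 'v \<Rightarrow> real" where
  "Qk K T x y = pmf (K x) y * (if y \<in> T then 0 else 1)"

definition stepv :: "('v::finite \<Rightarrow> 'v pmf) \<Rightarrow> 'v set \<Rightarrow> ('v \<Rightarrow> real) \<Rightarrow> 'v \<Rightarrow> real" where
  "stepv K T a y = (\<Sum>x\<in>UNIV. a x * Qk K T x y)"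

definition a0 :: "'v set \<Rightarrow> 'v \<Rightarrow> 'v \<Rightarrow> real" where
  "a0 T v y = (if y = v \<and> v \<notin> T then 1 else 0)"

definition Gs :: "'v set \<Rightarrow> nat \<Rightarrow> 'v \<Rightarrow> (nat \<Rightarrow> 'v) set" where
  "Gs T m y = {\<omega> \<in> space (PiM {0..<Suc m} (\<lambda>_. count_space UNIV)). (\<forall>i\<le>m. \<omega> i \<notin> T) \<and> \<omega> m = y}"

lemma Qk_nonneg: "0 \<le> Qk K T x y" by (simp add: Qk_def)

lemma stepv_nonneg: "(\<And>x. 0 \<le> a x) \<Longrightarrow> 0 \<le> stepv K T a y"
  by (simp add: stepv_def Qk_nonneg sum_nonneg)

lemma iter_nonneg: "0 \<le> ((stepv K T)^^m) (a0 T v) y"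
  by (induction m arbitrary: y) (auto simp: a0_def stepv_nonneg)

lemma meas_avoid:
  fixes K :: "'v::finite \<Rightarrow> 'v pmf"
  shows "emeasure (Ionescu_Tulcea.C (mc_step K v) (\<lambda>_. count_space UNIV) 0 (Suc m) (\<lambda>_. undefined)) (Gs T m y)
     = ennreal (((stepv K T)^^m) (a0 T v) y)"
proof -
  interpret IT: Ionescu_Tulcea "mc_step K v" "\<lambda>_. count_space UNIV" by (rule IT_mc)
  have Gsets: "Gs T m y \<in> sets (PiM {0..<Suc m} (\<lambda>_. count_space UNIV))" for m y
    by (rule sets_PiM_countable_all) (auto simp: Gs_def)
  show ?thesis
  proof (induction m arbitrary: y)
    case 0
    have u0: "(\<lambda>_. undefined) \<in> space (PiM {0..<0} (\<lambda>_. count_space (UNIV::'v set)))"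
      by (simp add: space_PiM PiE_def extensional_def)
    have "IT.C 0 (Suc 0) (\<lambda>_. undefined) = IT.eP 0 (\<lambda>_. undefined)"
      using bind_return[OF IT.measurable_eP u0] by simp
    moreover have "emeasure (IT.eP 0 (\<lambda>_. undefined)) (Gs T 0 y) = ennreal (a0 T v y)"
    proof -
      have "fun_upd (\<lambda>_. undefined) 0 -` Gs T 0 y \<inter> space (count_space UNIV) = {x. x \<notin> T \<and> x = y}"
        by (auto simp: Gs_def space_PiM PiE_def extensional_def)
      then show ?thesis
        by (subst IT.emeasure_eP[OF u0 Gsets[of 0 y]])
          (auto simp: mc_step_def a0_def)
    qed
    ultimately show ?case by simp
  next
    case (Suc m)
    let ?C = "IT.C 0 (Suc m) (\<lambda>_. undefined)"
    have u0: "(\<lambda>_. undefined) \<in> space (PiM {0..<0} (\<lambda>_. count_space (UNIV::'v set)))"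
      by (simp add: space_PiM PiE_def extensional_def)
    have spC: "space ?C = space (PiM {0..<Suc m} (\<lambda>_. count_space UNIV))"
      using IT.space_C[OF u0, of "Suc m"] by (simp only: add_0)
    have setsC: "sets ?C = sets (PiM {0..<Suc m} (\<lambda>_. count_space UNIV))"
      using IT.sets_C[OF u0, of "Suc m"] by (simp only: add_0)
    have ne: "space ?C \<noteq> {}"
      by (rule prob_space.not_empty[OF IT.prob_space_C[OF u0]])
    have meP: "IT.eP (Suc m) \<in> measurable ?C (subprob_algebra (PiM {0..<Suc (Suc m)} (\<lambda>_. count_space UNIV)))"
      by (subst measurable_cong_sets[OF setsC refl]) (rule IT.measurable_eP)
    have eqC: "IT.C 0 (Suc (Suc m)) (\<lambda>_. undefined) = ?C \<bind> IT.eP (Suc m)"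
      by simp
    have pt: "emeasure (IT.eP (Suc m) \<omega>) (Gs T (Suc m) y) =
        (\<Sum>x\<in>UNIV. ennreal (Qk K T x y) * indicator (Gs T m x) \<omega>)"
      if \<omega>: "\<omega> \<in> space (PiM {0..<Suc m} (\<lambda>_. count_space UNIV))" for \<omega>
    proof -
      have set: "fun_upd \<omega> (Suc m) -` Gs T (Suc m) y =
          (if (\<forall>i\<le>m. \<omega> i \<notin> T) \<and> y \<notin> T then {y} else {})"
        using \<omega> by (auto simp: Gs_def space_PiM PiE_def extensional_def le_Suc_eq)
      have ind: "indicator (Gs T m x) \<omega> = (if x = \<omega> m \<and> (\<forall>i\<le>m. \<omega> i \<notin> T) then 1 else (0::ennreal))" for x
        using \<omega> by (auto simp: Gs_def indicator_def)
      have sumeq: "(\<Sum>x\<in>UNIV. ennreal (Qk K T x y) * indicator (Gs T m x) \<omega>) =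
          (if (\<forall>i\<le>m. \<omega> i \<notin> T) then ennreal (Qk K T (\<omega> m) y) else 0)"
        by (cases "\<forall>i\<le>m. \<omega> i \<notin> T") (auto simp add: ind if_distrib[of "\<lambda>z. ennreal (Qk K T _ y) * z"] sum.delta' cong: if_cong)
      show ?thesis
        unfolding sumeq
        by (subst IT.emeasure_eP[OF \<omega> Gsets[of "Suc m" y]])
          (auto simp: set mc_step_def Qk_def emeasure_pmf_single)
    qed
    have "emeasure (IT.C 0 (Suc (Suc m)) (\<lambda>_. undefined)) (Gs T (Suc m) y)
        = (\<integral>\<^sup>+\<omega>. emeasure (IT.eP (Suc m) \<omega>) (Gs T (Suc m) y) \<partial>?C)"
      unfolding eqC by (rule emeasure_bind[OF ne meP Gsets])
    also have "\<dots> = (\<integral>\<^sup>+\<omega>. (\<Sum>x\<in>UNIV. ennreal (Qk K T x y) * indicator (Gs T m x) \<omega>) \<partial>?C)"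
      by (intro nn_integral_cong pt) (use spC in blast)
    also have "\<dots> = (\<Sum>x\<in>UNIV. ennreal (Qk K T x y) * emeasure ?C (Gs T m x))"
      apply (subst nn_integral_sum)
       apply (subst measurable_cong_sets[OF setsC refl])
       apply (rule measurable_PiM_countable_all, simp, simp)
      apply (rule sum.cong[OF refl])
      apply (rule nn_integral_cmult_indicator)
      apply (subst setsC)
      apply (rule Gsets)
      done
    also have "\<dots> = (\<Sum>x\<in>UNIV. ennreal (Qk K T x y * ((stepv K T)^^m) (a0 T v) x))"
      apply (rule sum.cong[OF refl])
      apply (subst Suc.IH)
      apply (simp add: ennreal_mult' Qk_nonneg iter_nonneg)
      done
    also have "\<dots> = ennreal (stepv K T (((stepv K T)^^m) (a0 T v)) y)"
      by (simp add: stepv_def Qk_nonneg iter_nonneg mult.commute)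
    finally show ?case by simp
  qed
qed


lemma pred_coord[measurable]:
  "Measurable.pred (PiM UNIV (\<lambda>_. count_space (UNIV::'v set))) (\<lambda>x. x n \<in> T)"
proof -
  have "(\<lambda>x. x n) -` T \<inter> space (PiM UNIV (\<lambda>_. count_space (UNIV::'v set))) \<in> sets (PiM UNIV (\<lambda>_. count_space (UNIV::'v set)))"
    by (rule measurable_sets[OF measurable_component_singleton]) auto
  then show ?thesis unfolding pred_def by (simp add: vimage_def Int_def conj_commute)
qed

lemma sets_avoid: "{\<omega>::nat \<Rightarrow> 'v. \<forall>i\<le>m. \<omega> i \<notin> T} \<in> sets (PiM UNIV (\<lambda>_. count_space UNIV))"
proof -
  have "{\<omega>::nat \<Rightarrow> 'v. \<forall>i\<le>m. \<omega> i \<notin> T} = {\<omega> \<in> space (PiM UNIV (\<lambda>_. count_space UNIV)). \<forall>i\<in>{..m}. \<omega> i \<notin> T}"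
    by (auto simp: space_PiM)
  also have "\<dots> \<in> sets (PiM UNIV (\<lambda>_. count_space UNIV))"
    by measurable
  finally show ?thesis .
qed

lemma sets_reach: "{\<omega>::nat \<Rightarrow> 'v. \<exists>n. \<omega> n \<in> T} \<in> sets (PiM UNIV (\<lambda>_. count_space UNIV))"
proof -
  have "{\<omega>::nat \<Rightarrow> 'v. \<exists>n. \<omega> n \<in> T} = {\<omega> \<in> space (PiM UNIV (\<lambda>_. count_space UNIV)). \<exists>n. \<omega> n \<in> T}"
    by (auto simp: space_PiM)
  also have "\<dots> \<in> sets (PiM UNIV (\<lambda>_. count_space UNIV))"
    by measurable
  finally show ?thesis .
qed

lemma lim_facts:
  fixes K :: "'v::finite \<Rightarrow> 'v pmf"
  shows "prob_space (mc_paths K v)"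
    and "sets (mc_paths K v) = sets (PiM UNIV (\<lambda>_. count_space UNIV))"
    and "space (mc_paths K v) = UNIV"
    and "emeasure (mc_paths K v) {\<omega>. \<forall>i\<le>m. \<omega> i \<notin> T} = ennreal (\<Sum>y\<in>UNIV. ((stepv K T)^^m) (a0 T v) y)"
proof -
  interpret IT: Ionescu_Tulcea "mc_step K v" "\<lambda>_. count_space UNIV" by (rule IT_mc)
  have lim: "mc_paths K v = IT.PF.lim" by (simp add: mc_paths_def)
  show sp: "space (mc_paths K v) = UNIV" unfolding lim by (simp add: space_PiM)
  show "sets (mc_paths K v) = sets (PiM UNIV (\<lambda>_. count_space UNIV))" unfolding lim by simp
  have u0: "(\<lambda>_. undefined) \<in> space (PiM {0..<0} (\<lambda>_. count_space (UNIV::'v set)))"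
    by (simp add: space_PiM PiE_def extensional_def)
  have "emeasure IT.PF.lim (IT.PF.emb UNIV {} {\<lambda>_. undefined}) = emeasure (IT.CI {}) {\<lambda>_. undefined}"
    by (rule IT.lim) (auto intro!: sets_PiM_countable_all simp: space_PiM)
  also have "\<dots> = 1"
  proof -
    have "emeasure (IT.CI {}) {\<lambda>_. undefined} = emeasure (IT.CI {}) (space (IT.CI {}))"
      using IT.PF.space_P[of "{}"] by (simp add: space_PiM)
    then show ?thesis using prob_space.emeasure_space_1[OF IT.PF.prob_space_P[of "{}"]] by simp
  qed
  also have "IT.PF.emb UNIV {} {\<lambda>_. undefined} = UNIV"
    by (auto simp: prod_emb_def space_PiM)
  finally show "prob_space (mc_paths K v)"
    using sp by (intro prob_spaceI) (simp add: lim)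
  define F where "F = {\<omega> \<in> space (PiM {0..<Suc m} (\<lambda>_. count_space (UNIV::'v set))). \<forall>i\<le>m. \<omega> i \<notin> T}"
  have Fs: "F \<in> sets (PiM {0..<Suc m} (\<lambda>_. count_space UNIV))"
    unfolding F_def by (rule sets_PiM_countable_all) auto
  have "{\<omega>. \<forall>i\<le>m. \<omega> i \<notin> T} = IT.PF.emb UNIV {0..<Suc m} F"
    by (auto simp: prod_emb_def F_def space_PiM PiE_def extensional_def)
  then have "emeasure (mc_paths K v) {\<omega>. \<forall>i\<le>m. \<omega> i \<notin> T} = emeasure (IT.CI {0..<Suc m}) F"
    using IT.lim[OF _ Fs] lim by simp
  also have "\<dots> = emeasure (IT.C 0 (Suc m) (\<lambda>_. undefined)) F"
  proof -
    have "IT.PF.emb {0..<Suc m} {0..<Suc m} F = F" by (rule prod_emb_id) (auto simp: F_def space_PiM)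
    then show ?thesis using IT.emeasure_CI[OF subset_refl Fs] by simp
  qed
  also have "F = (\<Union>y\<in>UNIV. Gs T m y)"
    by (auto simp: F_def Gs_def)
  also have "emeasure (IT.C 0 (Suc m) (\<lambda>_. undefined)) (\<Union>y\<in>UNIV. Gs T m y)
     = (\<Sum>y\<in>UNIV. emeasure (IT.C 0 (Suc m) (\<lambda>_. undefined)) (Gs T m y))"
  proof (rule sum_emeasure[symmetric])
    have "sets (IT.C 0 (Suc m) (\<lambda>_. undefined)) = sets (PiM {0..<Suc m} (\<lambda>_. count_space UNIV))"
      using IT.sets_C[OF u0, of "Suc m"] by (simp only: add_0)
    then show "range (Gs T m) \<subseteq> sets (IT.C 0 (Suc m) (\<lambda>_. undefined))"
      by (auto intro!: sets_PiM_countable_all simp: Gs_def)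
    show "disjoint_family_on (Gs T m) UNIV"
      by (auto simp: disjoint_family_on_def Gs_def)
  qed simp
  also have "\<dots> = ennreal (\<Sum>y\<in>UNIV. ((stepv K T)^^m) (a0 T v) y)"
    by (subst meas_avoid) (simp add: iter_nonneg)
  finally show "emeasure (mc_paths K v) {\<omega>. \<forall>i\<le>m. \<omega> i \<notin> T} = ennreal (\<Sum>y\<in>UNIV. ((stepv K T)^^m) (a0 T v) y)" .
qed


primrec gv :: "('v::finite \<Rightarrow> 'v pmf) \<Rightarrow> 'v set \<Rightarrow> nat \<Rightarrow> 'v \<Rightarrow> real" where
  "gv K T 0 x = 1"
| "gv K T (Suc n) x = (\<Sum>y\<in>UNIV. Qk K T x y * gv K T n y)"

lemma Qk_le_pmf: "Qk K T x y \<le> pmf (K x) y"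
  by (simp add: Qk_def)

lemma Qk_sum_le1:
  fixes K :: "'v::finite \<Rightarrow> 'v pmf"
  shows "(\<Sum>y\<in>UNIV. Qk K T x y) \<le> (1::real)"
proof -
  have "(\<Sum>y\<in>UNIV. Qk K T x y) \<le> (\<Sum>y\<in>UNIV. pmf (K x) y)"
    by (rule sum_mono) (rule Qk_le_pmf)
  also have "\<dots> = 1" by (rule sum_pmf_eq_1) auto
  finally show ?thesis .
qed

lemma gv_bounds: "0 \<le> gv K T n x \<and> gv K T n x \<le> 1"
proof (induction n arbitrary: x)
  case 0 then show ?case by simp
next
  case (Suc n)
  have "(\<Sum>y\<in>UNIV. Qk K T x y * gv K T n y) \<le> (\<Sum>y\<in>UNIV. Qk K T x y)"
    by (rule sum_mono, rule mult_left_le) (use Suc.IH in blast, rule Qk_nonneg)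
  also have "\<dots> \<le> 1" by (rule Qk_sum_le1)
  finally show ?case using Suc by (auto intro!: sum_nonneg simp: Qk_nonneg)
qed

lemma gv_Suc_le: "gv K T (Suc n) x \<le> gv K T n x"
proof (induction n arbitrary: x)
  case 0 then show ?case using Qk_sum_le1[of K T x] by simp
next
  case (Suc n)
  have "(\<Sum>y\<in>UNIV. Qk K T x y * gv K T (Suc n) y) \<le> (\<Sum>y\<in>UNIV. Qk K T x y * gv K T n y)"
    by (rule sum_mono, rule mult_left_mono) (rule Suc.IH, rule Qk_nonneg)
  then show ?case by simp
qed

lemma gv_mono: "m \<le> n \<Longrightarrow> gv K T n x \<le> gv K T m x"
proof (induction n rule: dec_induct)
  case base then show ?case by simp
next
  case (step n) then show ?case using gv_Suc_le[of K T n x] by linarith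
qed

lemma sum_iter: "(\<Sum>y\<in>UNIV. ((stepv K T)^^n) a y) = (\<Sum>x\<in>UNIV. a x * gv K T n x)"
proof (induction n arbitrary: a)
  case 0 then show ?case by simp
next
  case (Suc n)
  have "(\<Sum>y\<in>UNIV. ((stepv K T)^^Suc n) a y) = (\<Sum>y\<in>UNIV. ((stepv K T)^^n) (stepv K T a) y)"
    by (simp add: funpow_Suc_right del: funpow.simps)
  also have "\<dots> = (\<Sum>x\<in>UNIV. stepv K T a x * gv K T n x)" by (rule Suc)
  also have "\<dots> = (\<Sum>x\<in>UNIV. \<Sum>z\<in>UNIV. a z * (Qk K T z x * gv K T n x))"
    by (simp add: stepv_def sum_distrib_right mult.assoc)
  also have "\<dots> = (\<Sum>z\<in>UNIV. a z * gv K T (Suc n) z)"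
    by (subst sum.swap) (simp add: sum_distrib_left)
  finally show ?case .
qed

lemma iter_zero_T: "y \<in> T \<Longrightarrow> ((stepv K T)^^m) (a0 T v) y = 0"
  by (cases m) (auto simp: a0_def stepv_def Qk_def)

lemma mc_reach:
  fixes K :: "'v::finite \<Rightarrow> 'v pmf"
  assumes reach: "\<forall>x. x \<notin> T \<longrightarrow> (\<exists>k. gv K T (Suc k) x < 1)"
  shows "measure (mc_paths K v) {\<omega>. \<exists>n. \<omega> n \<in> T} = 1"
proof -
  obtain kf where kf: "\<And>x. x \<notin> T \<Longrightarrow> gv K T (Suc (kf x)) x < 1"
    using reach by metis
  define N where "N = Suc (Max (range kf))"
  have gvN: "gv K T N x < 1" if "x \<notin> T" for x
  proof -
    have "kf x \<le> Max (range kf)" by (rule Max_ge) auto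
    then have "gv K T N x \<le> gv K T (Suc (kf x)) x" unfolding N_def by (intro gv_mono) simp
    with kf[OF that] show ?thesis by linarith
  qed
  define c where "c = Max (insert 0 (gv K T N ` (- T)))"
  have c1: "c < 1" unfolding c_def using gvN by (subst Max_less_iff) auto
  have c0: "0 \<le> c" unfolding c_def by (rule Max_ge) auto
  have gvc: "gv K T N x \<le> c" if "x \<notin> T" for x
    unfolding c_def using that by (intro Max_ge) auto
  define a where "a m = ((stepv K T)^^m) (a0 T v)" for m
  define s where "s m = (\<Sum>y\<in>UNIV. a m y)" for m
  have a_nn: "0 \<le> a m y" for m y unfolding a_def by (rule iter_nonneg)
  have s_nn: "0 \<le> s m" for m unfolding s_def using a_nn by (simp add: sum_nonneg)
  have sN: "s (N + m) \<le> c * s m" for m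
  proof -
    have "s (N + m) = (\<Sum>y\<in>UNIV. ((stepv K T)^^N) (a m) y)"
      by (simp add: s_def a_def funpow_add)
    also have "\<dots> = (\<Sum>x\<in>UNIV. a m x * gv K T N x)" by (rule sum_iter)
    also have "\<dots> \<le> (\<Sum>x\<in>UNIV. a m x * c)"
    proof (rule sum_mono)
      fix x
      show "a m x * gv K T N x \<le> a m x * c"
      proof (cases "x \<in> T")
        case True then show ?thesis by (simp add: a_def iter_zero_T)
      next
        case False then show ?thesis using gvc[OF False] a_nn by (intro mult_left_mono) auto
      qed
    qed
    also have "\<dots> = c * s m" by (simp add: s_def sum_distrib_left mult.commute)
    finally show ?thesis .
  qed
  have s0: "s 0 \<le> 1" by (cases "v \<in> T") (simp_all add: s_def a_def a0_def sum.delta')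
  have sk: "s (k * N) \<le> c ^ k" for k
  proof (induction k)
    case 0 then show ?case using s0 by simp
  next
    case (Suc k)
    have "s (Suc k * N) = s (N + k * N)" by simp
    also have "\<dots> \<le> c * s (k * N)" by (rule sN)
    also have "\<dots> \<le> c * c ^ k" using Suc c0 by (intro mult_left_mono) auto
    finally show ?case by simp
  qed
  interpret P: prob_space "mc_paths K v" by (rule lim_facts(1))
  let ?R = "{\<omega>. \<exists>n. \<omega> n \<in> T}"
  let ?A = "{\<omega>::nat \<Rightarrow> 'v. \<forall>n. \<omega> n \<notin> T}"
  have Rs: "?R \<in> P.events" using sets_reach lim_facts(2) by blast
  have compl: "P.prob ?R = 1 - P.prob ?A"
  proof -
    have "space (mc_paths K v) - ?R = ?A" using lim_facts(3) by auto
    then show ?thesis using P.prob_compl[OF Rs] by simp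
  qed
  have Am: "P.prob ?A \<le> s m" for m
  proof -
    have Ams: "{\<omega>. \<forall>i\<le>m. \<omega> i \<notin> T} \<in> P.events" using sets_avoid lim_facts(2) by blast
    have "P.prob ?A \<le> P.prob {\<omega>. \<forall>i\<le>m. \<omega> i \<notin> T}"
      by (rule P.finite_measure_mono[OF _ Ams]) auto
    also have "P.prob {\<omega>. \<forall>i\<le>m. \<omega> i \<notin> T} = s m"
    proof -
      have "ennreal (P.prob {\<omega>. \<forall>i\<le>m. \<omega> i \<notin> T}) = ennreal (s m)"
        using lim_facts(4)[of K v m T] P.emeasure_eq_measure by (simp add: s_def a_def)
      then show ?thesis using s_nn by simp
    qed
    finally show ?thesis .
  qed
  have "P.prob ?A = 0"
  proof (rule ccontr)
    assume "P.prob ?A \<noteq> 0"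
    then have "P.prob ?A > 0" using measure_nonneg[of "mc_paths K v" ?A] by linarith
    then obtain k where "c ^ k < P.prob ?A" using real_arch_pow_inv c1 by blast
    with Am[of "k * N"] sk[of k] show False by linarith
  qed
  with compl show ?thesis by simp
qed


lemma gv_step:
  fixes K :: "'v::finite \<Rightarrow> 'v pmf"
  assumes y: "pmf (K x) y > 0" and good: "y \<in> T \<or> (\<exists>k. gv K T (Suc k) y < 1)"
  shows "\<exists>k. gv K T (Suc k) x < 1"
proof -
  obtain k where hy: "y \<in> T \<or> gv K T k y < 1"
    using good by blast
  have "gv K T (Suc k) x = (\<Sum>z\<in>UNIV. Qk K T x z * gv K T k z)" by simp
  also have "\<dots> = Qk K T x y * gv K T k y + (\<Sum>z\<in>UNIV - {y}. Qk K T x z * gv K T k z)"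
    by (rule sum.remove) auto
  also have "(\<Sum>z\<in>UNIV - {y}. Qk K T x z * gv K T k z) \<le> (\<Sum>z\<in>UNIV - {y}. pmf (K x) z)"
  proof (rule sum_mono)
    fix z
    have "Qk K T x z * gv K T k z \<le> Qk K T x z"
      using gv_bounds[of K T k z] Qk_nonneg[of K T x z] by (intro mult_left_le) auto
    then show "Qk K T x z * gv K T k z \<le> pmf (K x) z" using Qk_le_pmf[of K T x z] by linarith
  qed
  also have "(\<Sum>z\<in>UNIV - {y}. pmf (K x) z) = 1 - pmf (K x) y"
  proof -
    have "(\<Sum>z\<in>UNIV. pmf (K x) z) = 1" by (rule sum_pmf_eq_1) auto
    moreover have "(\<Sum>z\<in>UNIV. pmf (K x) z) = pmf (K x) y + (\<Sum>z\<in>UNIV - {y}. pmf (K x) z)"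
      by (rule sum.remove) auto
    ultimately show ?thesis by linarith
  qed
  also have "Qk K T x y * gv K T k y < pmf (K x) y"
  proof (cases "y \<in> T")
    case True then show ?thesis using y by (simp add: Qk_def)
  next
    case False
    then have "gv K T k y < 1" using hy by auto
    then show ?thesis using False y by (simp add: Qk_def)
  qed
  finally show ?thesis by auto
qed

lemma scc_same: "u \<in> scc E v \<Longrightarrow> scc E u = scc E v"
  unfolding scc_def by (auto intro: rtrancl_trans)

lemma neg_same: "u \<in> scc E v \<Longrightarrow> scc_has_neg_cycle E w u = scc_has_neg_cycle E w v"
  unfolding scc_has_neg_cycle_def using scc_same by metis

lemma not_inj_nat: "\<exists>i j. i < j \<and> (\<omega>::nat \<Rightarrow> 'v::finite) i = \<omega> j"
proof (rule ccontr)
  assume "\<not> ?thesis"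
  then have "inj \<omega>" by (metis inj_onI linorder_neqE_nat)
  then have "finite (UNIV::nat set)" using finite_imageD[of \<omega> UNIV] by auto
  then show False by simp
qed


theorem proposition11:
  fixes VMax VMin T :: "'v::finite set" and E :: "('v \<times> 'v) set" and w :: "'v \<Rightarrow> 'v \<Rightarrow> int"
    and \<sigma>1 \<sigma>2 :: "'v \<Rightarrow> 'v" and p :: real and v0 :: 'v and \<tau> :: "'v \<Rightarrow> 'v pmf"
  assumes game: "spg VMax VMin T E"
    and fin_d: "\<forall>v. Val_d VMax VMin T E w v \<noteq> \<infinity>"
    and fin_m: "\<forall>v. Val_m_bar VMax VMin T E w v \<noteq> \<infinity>"
    and NC: "NC_strategy VMin E w \<sigma>1"
    and fake: "fake_optimal VMax VMin T E w \<sigma>1"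
    and attr: "attractor_strategy VMin T E \<sigma>2"
    and p: "0 < p" "p < 1"
    and tau: "memoryless_strategy E VMax \<tau>"
  shows "measure (mc_paths (mc_kernel VMax VMin (rho_p E w \<sigma>1 \<sigma>2 p) \<tau>) v0)
           {\<omega>. \<exists>n. \<omega> n \<in> T} = 1"
proof -
  define K where "K = mc_kernel VMax VMin (rho_p E w \<sigma>1 \<sigma>2 p) \<tau>"
  let ?neg = "scc_has_neg_cycle E w"
  define Good where "Good = {x. x \<in> T \<or> (\<exists>k. gv K T (Suc k) x < 1)}"
  define s where "s u = (if u \<in> VMin then (if ?neg u then \<sigma>2 u else \<sigma>1 u) else SOME z. z \<in> set_pmf (\<tau> u))" for u
  have part: "VMax \<inter> VMin = {}" "VMax \<inter> T = {}" "VMin \<inter> T = {}" "VMax \<union> VMin \<union> T = UNIV"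
    using game by (auto simp: spg_def)
  have md1: "\<And>u. u \<in> VMin \<Longrightarrow> (u, \<sigma>1 u) \<in> E" using NC by (auto simp: NC_strategy_def md_strategy_def)
  have md2: "\<And>u. u \<in> VMin \<Longrightarrow> (u, \<sigma>2 u) \<in> E" using attr by (auto simp: attractor_strategy_def md_strategy_def)
  have s_prop: "pmf (K u) (s u) > 0 \<and> (u, s u) \<in> E" if u: "u \<notin> T" for u
  proof (cases "u \<in> VMin")
    case True
    then have Ku: "K u = rho_p E w \<sigma>1 \<sigma>2 p u" by (simp add: K_def mc_kernel_def)
    have "s u \<in> set_pmf (K u)"
    proof (cases "?neg u")
      case neg: True
      show ?thesis
      proof (cases "\<sigma>1 u = \<sigma>2 u")
        case True then show ?thesis using neg \<open>u \<in> VMin\<close> by (simp add: Ku rho_p_def s_def)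
      next
        case False
        have "False \<in> set_pmf (bernoulli_pmf p)" using p by simp
        moreover have "s u = \<sigma>2 u" using neg \<open>u \<in> VMin\<close> by (simp add: s_def)
        moreover have "K u = map_pmf (\<lambda>b. if b then \<sigma>1 u else \<sigma>2 u) (bernoulli_pmf p)"
          using neg False by (simp add: Ku rho_p_def)
        ultimately show ?thesis
          by (simp only: set_map_pmf) (rule rev_image_eqI[of False], simp_all)
      qed
    next
      case False then show ?thesis using \<open>u \<in> VMin\<close> by (simp add: Ku rho_p_def s_def)
    qed
    moreover have "(u, s u) \<in> E" using True md1 md2 by (simp add: s_def)
    ultimately show ?thesis by (simp add: set_pmf_iff less_le)
  next
    case False
    then have uM: "u \<in> VMax" using part u by blast
    then have Ku: "K u = \<tau> u" using part by (auto simp add: K_def mc_kernel_def)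
    have "s u \<in> set_pmf (\<tau> u)" using False by (simp add: s_def some_in_eq set_pmf_not_empty)
    moreover then have "(u, s u) \<in> E" using tau uM by (auto simp: memoryless_strategy_def)
    ultimately show ?thesis using Ku by (simp add: set_pmf_iff less_le)
  qed
  have s_min: "u \<in> VMin \<Longrightarrow> s u = (if ?neg u then \<sigma>2 u else \<sigma>1 u)" for u by (simp add: s_def)
  have "\<forall>x0. x0 \<notin> T \<longrightarrow> (\<exists>k. gv K T (Suc k) x0 < 1)"
  proof (intro allI impI)
  fix x0 assume x0T: "x0 \<notin> T"
  show "\<exists>k. gv K T (Suc k) x0 < 1"
  proof (rule ccontr)
    assume "\<not> ?thesis"
    then have x0: "x0 \<notin> Good" using x0T by (simp add: Good_def)
    define \<omega> where "\<omega> n = (s ^^ n) x0" for n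
    have \<omega>Suc: "\<omega> (Suc n) = s (\<omega> n)" for n by (simp add: \<omega>_def)
    have bad: "\<omega> n \<notin> Good" for n
    proof (induction n)
      case 0 then show ?case using x0 by (simp add: \<omega>_def)
    next
      case (Suc n)
      then have nT: "\<omega> n \<notin> T" by (simp add: Good_def)
      show ?case
      proof
        assume "\<omega> (Suc n) \<in> Good"
        then have "\<omega> n \<in> Good"
          using gv_step[of K "\<omega> n" "s (\<omega> n)" T] s_prop[OF nT] by (simp add: Good_def \<omega>Suc)
        with Suc show False by simp
      qed
    qed
    have nT: "\<omega> n \<notin> T" for n using bad[of n] by (simp add: Good_def)
    have edge: "(\<omega> n, \<omega> (Suc n)) \<in> E" for n using s_prop[OF nT[of n]] by (simp add: \<omega>Suc)
    have reach: "(\<omega> i, \<omega> k) \<in> E\<^sup>*" if "i \<le> k" for i k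
      using that
    proof (induction k rule: dec_induct)
      case base then show ?case by simp
    next
      case (step k) then show ?case using edge[of k] by (meson rtrancl_into_rtrancl)
    qed
    obtain i j where ij: "i < j" "\<omega> i = \<omega> j" using not_inj_nat[of \<omega>] by blast
    define y0 where "y0 = \<omega> i"
    define Cy where "Cy = \<omega> ` {i..j}"
    have Cy_scc: "Cy \<subseteq> scc E y0"
    proof
      fix u assume "u \<in> Cy"
      then obtain k where k: "i \<le> k" "k \<le> j" "u = \<omega> k" by (auto simp: Cy_def)
      have "(y0, u) \<in> E\<^sup>*" using reach[OF k(1)] k by (simp add: y0_def)
      moreover have "(u, y0) \<in> E\<^sup>*" using reach[OF k(2)] k ij by (simp add: y0_def)
      ultimately show "u \<in> scc E y0" by (simp add: scc_def)
    qed
    have Cy_s: "s u \<in> Cy" if "u \<in> Cy" for u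
    proof -
      obtain k where k: "i \<le> k" "k \<le> j" "u = \<omega> k" using \<open>u \<in> Cy\<close> by (auto simp: Cy_def)
      show ?thesis
      proof (cases "k < j")
        case True
        then have "Suc k \<in> {i..j}" using k by simp
        moreover have "s u = \<omega> (Suc k)" using k by (simp add: \<omega>Suc)
        ultimately show ?thesis unfolding Cy_def by blast
      next
        case False
        then have "u = \<omega> i" using k ij by simp
        then have "s u = \<omega> (Suc i)" by (simp add: \<omega>Suc)
        moreover have "Suc i \<in> {i..j}" using ij by simp
        ultimately show ?thesis unfolding Cy_def by blast
      qed
    qed
    have Cy_nT: "u \<in> Cy \<Longrightarrow> u \<notin> T" for u using nT unfolding Cy_def by blast
    have Cy_neg: "u \<in> Cy \<Longrightarrow> ?neg u = ?neg y0" for u using Cy_scc neg_same[of u E y0 w] by blast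
    show False
    proof (cases "?neg y0")
      case True
      define \<omega>' where "\<omega>' n = (s ^^ n) y0" for n
      have inC: "\<omega>' n \<in> Cy" for n
      proof (induction n)
        case 0
        have "i \<in> {i..j}" using ij by simp
        then show ?case unfolding \<omega>'_def Cy_def y0_def by simp
      next
        case (Suc n)
        then show ?case using Cy_s by (simp add: \<omega>'_def)
      qed
      have "\<forall>n. \<omega>' n \<notin> T \<and> (\<omega>' n, \<omega>' (Suc n)) \<in> E \<and> (\<omega>' n \<in> VMin \<longrightarrow> \<omega>' (Suc n) = \<sigma>2 (\<omega>' n))"
      proof
        fix n
        have "\<omega>' (Suc n) = s (\<omega>' n)" by (simp add: \<omega>'_def)
        moreover have "?neg (\<omega>' n)" using Cy_neg[OF inC[of n]] True by simp
        ultimately show "\<omega>' n \<notin> T \<and> (\<omega>' n, \<omega>' (Suc n)) \<in> E \<and> (\<omega>' n \<in> VMin \<longrightarrow> \<omega>' (Suc n) = \<sigma>2 (\<omega>' n))"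
          using Cy_nT[OF inC[of n]] s_prop[OF Cy_nT[OF inC[of n]]] s_min[of "\<omega>' n"] by simp
      qed
      then show False using attr unfolding attractor_strategy_def by blast
    next
      case False
      define xs where "xs = map \<omega> [i..<Suc j]"
      have len: "length xs = Suc j - i" using ij by (simp add: xs_def del: upt_Suc)
      have nth: "k < length xs \<Longrightarrow> xs ! k = \<omega> (i + k)" for k by (simp add: xs_def del: upt_Suc)
      have cyc: "is_cycle E xs"
        unfolding is_cycle_def is_path_def
      proof (intro conjI allI impI)
        show "xs \<noteq> []" using ij by (simp add: xs_def del: upt_Suc)
        show "2 \<le> length xs" using len ij by simp
        fix k assume "k < length xs - 1"
        then show "(xs ! k, xs ! Suc k) \<in> E" using nth edge[of "i + k"] by simp
      next
        show "hd xs = last xs" using ij by (simp add: xs_def hd_map last_map)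
      qed
      have conf: "conforms VMin \<sigma>1 xs"
        unfolding conforms_def
      proof (intro allI impI)
        fix k assume k: "k < length xs - 1" and "xs ! k \<in> VMin"
        then have mk: "\<omega> (i + k) \<in> VMin" using nth by simp
        have "\<omega> (i + k) \<in> Cy" using k len by (auto simp: Cy_def)
        then have "\<not> ?neg (\<omega> (i + k))" using Cy_neg False by blast
        then show "xs ! Suc k = \<sigma>1 (xs ! k)" using k nth mk s_min \<omega>Suc[of "i + k"] by simp
      qed
      have "path_weight w xs < 0" using NC cyc conf by (simp add: NC_strategy_def)
      moreover have "set xs \<subseteq> scc E y0" using Cy_scc by (auto simp: xs_def Cy_def)
      ultimately have "?neg y0" using cyc unfolding scc_has_neg_cycle_def by blast
      with False show False by simp
    qed
  qed
  qed
  then show ?thesis using mc_reach[of T K v0] by (simp add: K_def)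
qed

end
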